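(* Let $\xi=(\xi_1,\xi_2)$ be uniformly distributed on $\Theta:=([-1,1]\times[0,1])\cup([0,1]\times[-1,0])\subset\mathbb{R}^2$ and let $p=1/3$. Policies are pairs $y=(y_1,y_2(\cdot))$ with $y_1\in\mathbb{R}$ and $y_2:\mathbb{R}\to\mathbb{R}$ Borel measurable, and $h(y):=y_1$. Let $M_1:=\{y: \mathbb{P}(\xi_1\le y_1,\ \xi_2\le y_2(\xi_1))\ge 1/3,\ y_1\in[0,1],\ y_2(\xi_1)\in[0,1]\ \mathbb{P}\text{-a.s.}\}$, $M_2:=\{y:\mathbb{P}(\xi_1\le y_1,\ \xi_2\le y_2(\xi_1),\ y_1\in[0,1],\ y_2(\xi_1)\in[0,1])\ge 1/3\}$, $\Pi(y_1,y_2(\cdot)):=(\max\{0,\min\{y_1,1\}\},\max\{0,\min\{y_2(\cdot),1\}\})$, and $\mathcal{K}:=\{(y_1,y_2): y_1\in\mathbb{R},\ \exists a\ge -1 \text{ with } y_2(\xi_1)=a\xi_1\}$. With $\varphi,\varphi_1,\varphi_2,\varphi_3,\varphi_4$ defined as: $\varphi:=\inf\{h(y):y\in M_1\}$, $\varphi_1:=\inf\{h(y):y\in M_1\cap\mathcal{K}\}$, $\varphi_2:=\inf\{h(z):z\in\Pi(\arg\min\{h(y):y\in M_2\cap\mathcal{K}\})\}$, $\varphi_3:=\inf\{h(y):y\in\Pi(M_2\cap\mathcal{K})\}$, $\varphi_4:=\inf\{h(y):y\in M_1\cap\Pi(\mathcal{K})\}$, one has \[ \varphi=0,\quad \varphi_1=1,\quad\varphi_2=\varphi_3=2/3,\quad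 \varphi_4=1/2. \] Moreover, $(2/3,\tfrac32\xi_1)$ is the unique minimizer of $h$ over $M_2\cap\mathcal{K}$, $\Pi(2/3,\tfrac32\xi_1)=(2/3,\max\{0,\min\{\tfrac32\xi_1,1\}\})$ solves the problem defining $\varphi_3$, and $\varphi_4$ is attained at $(1/2,\max\{0,\min\{-\xi_1,1\}\})=\Pi(1/2,-\xi_1)$. *)

theory Defs
  imports "HOL-Probability.Probability"
begin

definition Theta :: "(real \<times> real) set" where
  "Theta = ({-1..1} \<times> {0..1}) \<union> ({0..1} \<times> {-1..0})"

definition Pxi :: "(real \<times> real) measure" where
  "Pxi = uniform_measure lborel Theta"

type_synonym policy = "real \<times> (real \<Rightarrow> real)"

definition h :: "policy \<Rightarrow> real" where
  "h y = fst y"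

definition policies :: "policy set" where
  "policies = {y. snd y \<in> borel_measurable borel}"

definition M1 :: "policy set" where
  "M1 = {y \<in> policies.
      measure Pxi {x. fst x \<le> fst y \<and> snd x \<le> snd y (fst x)} \<ge> 1/3
    \<and> fst y \<in> {0..1}
    \<and> (AE x in Pxi. snd y (fst x) \<in> {0..1})}"

definition M2 :: "policy set" where
  "M2 = {y \<in> policies.
      measure Pxi {x. fst x \<le> fst y \<and> snd x \<le> snd y (fst x)
                   \<and> fst y \<in> {0..1} \<and> snd y (fst x) \<in> {0..1}} \<ge> 1/3}"

definition clip :: "real \<Rightarrow> real" where
  "clip t = max 0 (min t 1)"

definition Proj :: "policy \<Rightarrow> policy" where
  "Proj y = (clip (fst y), (\<lambda>t. clip (snd y t)))"

definition K :: "policy set" where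
  "K = {y \<in> policies. \<exists>a::real. a \<ge> -1 \<and> snd y = (\<lambda>t. a * t)}"

definition argmin_h :: "policy set \<Rightarrow> policy set" where
  "argmin_h S = {y \<in> S. \<forall>z \<in> S. h y \<le> h z}"

definition phi :: real where "phi = Inf (h ` M1)"
definition phi1 :: real where "phi1 = Inf (h ` (M1 \<inter> K))"
definition phi2 :: real where "phi2 = Inf (h ` (Proj ` argmin_h (M2 \<inter> K)))"
definition phi3 :: real where "phi3 = Inf (h ` (Proj ` (M2 \<inter> K)))"
definition phi4 :: real where "phi4 = Inf (h ` (M1 \<inter> Proj ` K))"

end

theory Submission imports Defs begin

definition reg :: "real \<Rightarrow> real \<Rightarrow> real \<Rightarrow> real \<Rightarrow> real \<Rightarrow> (real \<times> real) set" where
  "reg l u c a b = {p. l \<le> fst p \<and> fst p \<le> u \<and> c \<le> snd p \<and> snd p \<le> a * fst p + b}"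

lemma sets_lborel_pair: "S \<in> sets (borel \<Otimes>\<^sub>M borel) \<Longrightarrow> S \<in> sets (lborel :: (real\<times>real) measure)"
  by (metis borel_prod sets_lborel)

lemma reg_sets: "reg l u c a b \<in> sets (borel \<Otimes>\<^sub>M borel)"
proof -
  have "{p \<in> space (borel \<Otimes>\<^sub>M borel). l \<le> fst p \<and> fst p \<le> (u::real) \<and> c \<le> snd p \<and> snd p \<le> a * fst p + (b::real)} \<in> sets (borel \<Otimes>\<^sub>M borel)"
    by measurable
  then show ?thesis by (simp add: space_pair_measure reg_def)
qed

lemma reg_lsets: "reg l u c a b \<in> sets lborel"
  by (rule sets_lborel_pair[OF reg_sets])

lemma reg_emeasure:
  fixes l u c a b :: real
  assumes lu: "l \<le> u" and pos: "\<And>x. l \<le> x \<Longrightarrow> x \<le> u \<Longrightarrow> c \<le> a * x + b"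
  shows "emeasure lborel (reg l u c a b) = ennreal ((u - l) * (a * (u + l) / 2 + b - c))"
proof -
  let ?R = "reg l u c a b"
  have Rs: "?R \<in> sets (lborel \<Otimes>\<^sub>M lborel)" using reg_sets by simp
  have "emeasure lborel ?R = emeasure (lborel \<Otimes>\<^sub>M lborel) ?R" by (simp add: lborel_prod)
  also have "\<dots> = (\<integral>\<^sup>+x. emeasure lborel (Pair x -` ?R) \<partial>lborel)"
    by (rule lborel.emeasure_pair_measure_alt[OF Rs])
  also have "\<dots> = (\<integral>\<^sup>+x. ennreal (indicator {l..u} x * (a * x + b - c)) \<partial>lborel)"
  proof (rule nn_integral_cong)
    fix x :: real
    show "emeasure lborel (Pair x -` ?R) = ennreal (indicator {l..u} x * (a * x + b - c))"
    proof (cases "l \<le> x \<and> x \<le> u")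
      case True
      then have "Pair x -` ?R = {c..a*x+b}" by (auto simp: reg_def)
      then show ?thesis using True pos[of x] by (simp add: indicator_def)
    next
      case False
      then have "Pair x -` ?R = {}" by (auto simp: reg_def)
      then show ?thesis using False by (auto simp: indicator_def)
    qed
  qed
  also have "\<dots> = ennreal ((u - l) * (a * (u + l) / 2 + b - c))"
  proof -
    have d: "\<And>x. ((\<lambda>x. a * x\<^sup>2 / 2 + (b - c) * x) has_vector_derivative (a * x + b - c)) (at x within {l..u})"
      by (auto intro!: derivative_eq_intros simp: has_real_derivative_iff_has_vector_derivative[symmetric] algebra_simps)
    have "((\<lambda>x. a * x + b - c) has_integral ((a * u\<^sup>2 / 2 + (b - c) * u) - (a * l\<^sup>2 / 2 + (b - c) * l))) {l..u}"
      by (rule fundamental_theorem_of_calculus[OF lu]) (use d in auto)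
    moreover have "(a * u\<^sup>2 / 2 + (b - c) * u) - (a * l\<^sup>2 / 2 + (b - c) * l) = (u - l) * (a * (u + l) / 2 + b - c)"
      by (simp add: power2_eq_square field_simps)
    ultimately have I: "((\<lambda>x. a * x + b - c) has_integral ((u - l) * (a * (u + l) / 2 + b - c))) {l..u}" by simp
    have "integral\<^sup>N lborel (\<lambda>x. indicator {l..u} x * (a * x + b - c)) = (u - l) * (a * (u + l) / 2 + b - c)"
      by (rule nn_integral_has_integral_lebesgue[OF _ I]) (use pos in auto)
    then show ?thesis by simp
  qed
  finally show ?thesis .
qed

definition L0 :: "(real \<times> real) set" where "L0 = {p. fst p = 0}"
definition H0 :: "(real \<times> real) set" where "H0 = {p. snd p = 0}"

lemma L0_null: "L0 \<in> null_sets lborel"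
proof -
  have eq: "L0 = {0} \<times> UNIV" by (auto simp: L0_def)
  have "emeasure (lborel \<Otimes>\<^sub>M lborel) ({0::real} \<times> (UNIV::real set)) = emeasure lborel {0::real} * emeasure lborel (UNIV::real set)"
    by (rule sigma_finite_measure.emeasure_pair_measure_Times[OF sigma_finite_lborel]) auto
  then have "emeasure lborel L0 = 0" by (simp add: lborel_prod eq)
  moreover have "L0 \<in> sets lborel" unfolding eq by (rule sets_lborel_pair) auto
  ultimately show ?thesis by auto
qed

lemma H0_null: "H0 \<in> null_sets lborel"
proof -
  have eq: "H0 = UNIV \<times> {0}" by (auto simp: H0_def)
  have "emeasure (lborel \<Otimes>\<^sub>M lborel) ((UNIV::real set) \<times> {0::real}) = emeasure lborel (UNIV::real set) * emeasure lborel {0::real}"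
    by (rule sigma_finite_measure.emeasure_pair_measure_Times[OF sigma_finite_lborel]) auto
  then have "emeasure lborel H0 = 0" by (simp add: lborel_prod eq)
  moreover have "H0 \<in> sets lborel" unfolding eq by (rule sets_lborel_pair) auto
  ultimately show ?thesis by auto
qed

lemma Theta_eq: "Theta = reg (-1) 1 0 0 1 \<union> reg 0 1 (-1) 0 0"
  by (auto simp: Theta_def reg_def)

lemma Theta_sets: "Theta \<in> sets lborel"
  unfolding Theta_eq by (intro sets.Un reg_lsets)

lemma Theta_emeasure: "emeasure lborel Theta = 3"
proof -
  have n: "reg (-1) 1 0 0 1 \<inter> reg 0 1 (-1) 0 0 \<in> null_sets lborel"
    by (rule null_sets_subset[OF H0_null sets.Int[OF reg_lsets reg_lsets]]) (auto simp: reg_def H0_def)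
  have "emeasure lborel Theta = emeasure lborel (reg (-1) 1 0 0 1) + emeasure lborel (reg 0 1 (-1) 0 0)"
    unfolding Theta_eq by (rule emeasure_Un'[OF reg_lsets reg_lsets n])
  also have "\<dots> = ennreal 2 + ennreal 1"
    by (subst reg_emeasure, simp, simp)+ simp
  finally show ?thesis by (simp flip: ennreal_plus)
qed

lemma Pxi_prob: "prob_space Pxi"
  unfolding Pxi_def by (rule prob_space_uniform_measure) (simp_all add: Theta_emeasure)

lemma sets_Pxi[simp]: "sets Pxi = sets lborel"
  by (simp add: Pxi_def)

lemma measure_Pxi: "A \<in> sets lborel \<Longrightarrow> measure Pxi A = measure lborel (Theta \<inter> A) / 3"
  unfolding Pxi_def
  by (subst measure_uniform_measure) (simp_all add: Theta_emeasure measure_def)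

lemma Pxi_upper:
  assumes sub: "A \<inter> Theta \<subseteq> N" and N: "N \<in> sets lborel" and le: "emeasure lborel N \<le> ennreal v" and v: "0 \<le> v"
  shows "measure Pxi A \<le> v / 3"
proof -
  interpret prob_space Pxi by (rule Pxi_prob)
  let ?B = "N \<union> (UNIV - Theta)"
  have B: "?B \<in> sets lborel" using N Theta_sets by auto
  have "measure Pxi A \<le> measure Pxi ?B"
    by (rule finite_measure_mono) (use sub B in auto)
  also have "\<dots> = measure lborel (Theta \<inter> N) / 3"
    using B by (simp add: measure_Pxi Int_Un_distrib)
  also have "measure lborel (Theta \<inter> N) \<le> v"
  proof -
    have "emeasure lborel (Theta \<inter> N) \<le> emeasure lborel N" by (rule emeasure_mono) (use N in auto)
    also note le
    finally have "emeasure lborel (Theta \<inter> N) \<le> ennreal v" .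
    then show ?thesis using v
      by (metis emeasure_eq_ennreal_measure ennreal_le_iff ennreal_neq_top top.extremum_uniqueI)
  qed
  finally show ?thesis by simp
qed

lemma Pxi_lower:
  assumes A: "A \<in> sets lborel" and sub: "N \<subseteq> A \<inter> Theta" and N: "N \<in> sets lborel" and ge: "ennreal v \<le> emeasure lborel N" and v: "0 \<le> v"
  shows "v / 3 \<le> measure Pxi A"
proof -
  have "emeasure lborel N \<le> emeasure lborel (Theta \<inter> A)" by (rule emeasure_mono) (use sub A Theta_sets in auto)
  with ge have g: "ennreal v \<le> emeasure lborel (Theta \<inter> A)" by simp
  have "emeasure lborel (Theta \<inter> A) \<le> emeasure lborel Theta" by (rule emeasure_mono) (use Theta_sets in auto)
  then have f: "emeasure lborel (Theta \<inter> A) \<noteq> \<infinity>" by (auto simp: Theta_emeasure top_unique)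
  have "ennreal v \<le> ennreal (measure lborel (Theta \<inter> A))"
    using g f by (simp add: emeasure_eq_ennreal_measure)
  moreover have "0 \<le> measure lborel (Theta \<inter> A)" by (rule measure_nonneg)
  ultimately have "v \<le> measure lborel (Theta \<inter> A)"
    using v by (auto simp: ennreal_le_iff2)
  then show ?thesis using A by (simp add: measure_Pxi)
qed

lemma A1_sets: assumes [measurable]: "f \<in> borel_measurable borel"
  shows "{x::real\<times>real. fst x \<le> c \<and> snd x \<le> f (fst x)} \<in> sets lborel"
proof -
  have "{p \<in> space (borel \<Otimes>\<^sub>M borel). fst p \<le> c \<and> snd p \<le> f (fst p)} \<in> sets (borel \<Otimes>\<^sub>M borel)"
    by measurable
  then show ?thesis by (intro sets_lborel_pair) (simp add: space_pair_measure)
qed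

lemma A2_sets: assumes [measurable]: "f \<in> borel_measurable borel"
  shows "{x::real\<times>real. fst x \<le> c \<and> snd x \<le> f (fst x) \<and> c \<in> {0..1} \<and> f (fst x) \<in> {0..1}} \<in> sets lborel"
proof -
  have "{p \<in> space (borel \<Otimes>\<^sub>M borel). fst p \<le> c \<and> snd p \<le> f (fst p) \<and> c \<in> {0..1} \<and> f (fst p) \<in> {0..1}} \<in> sets (borel \<Otimes>\<^sub>M borel)"
    by measurable
  then show ?thesis by (intro sets_lborel_pair) (simp add: space_pair_measure)
qed

lemma lin_meas: "(\<lambda>t::real. a * t) \<in> borel_measurable borel"
  by measurable

lemma M2K_bound:
  assumes y: "y \<in> M2 \<inter> K"
  shows "0 \<le> fst y \<and> fst y \<le> 1 \<and> 2/3 \<le> fst y \<and> (fst y = 2/3 \<longrightarrow> snd y = (\<lambda>t. 3/2 * t))"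
proof -
  obtain a where a: "a \<ge> -1" "snd y = (\<lambda>t. a * t)" using y by (auto simp: K_def)
  define c where "c = fst y"
  define A where "A = {x::real\<times>real. fst x \<le> c \<and> snd x \<le> a * fst x \<and> c \<in> {0..1} \<and> a * fst x \<in> {0..1}}"
  have P: "1/3 \<le> measure Pxi A" using y a unfolding A_def c_def M2_def by auto
  have c01: "c \<in> {0..1}"
  proof (rule ccontr)
    assume "c \<notin> {0..1}"
    then have "A = {}" by (auto simp: A_def)
    with P show False by simp
  qed
  have main: "2/3 \<le> c \<and> (c = 2/3 \<longrightarrow> a = 3/2)"
  proof (cases a "0::real" rule: linorder_cases)
    case less
    have sub: "A \<inter> Theta \<subseteq> reg (-1) 0 0 (-1) 0 \<union> L0"
    proof
      fix x assume x: "x \<in> A \<inter> Theta"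
      show "x \<in> reg (-1) 0 0 (-1) 0 \<union> L0"
      proof (cases "fst x = 0")
        case True then show ?thesis by (simp add: L0_def)
      next
        case False
        have "0 \<le> a * fst x" using x by (auto simp: A_def)
        then have "fst x \<le> 0" using less by (simp add: zero_le_mult_iff)
        then have neg: "fst x < 0" using False by simp
        have "(a + 1) * fst x \<le> 0" using a(1) neg by (intro mult_nonneg_nonpos) auto
        then have "a * fst x \<le> - fst x" by (simp add: algebra_simps)
        then show ?thesis using x neg by (auto simp: A_def Theta_def reg_def)
      qed
    qed
    have "emeasure lborel (reg (-1) 0 0 (-1) 0 \<union> L0) = emeasure lborel (reg (-1) 0 0 (-1) 0)"
      by (rule emeasure_Un_null_set[OF reg_lsets L0_null])
    also have "\<dots> = ennreal (1/2)" by (subst reg_emeasure) auto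
    finally have "measure Pxi A \<le> (1/2) / 3"
      by (intro Pxi_upper[OF sub sets.Un[OF reg_lsets null_setsD2[OF L0_null]]]) auto
    with P show ?thesis by simp
  next
    case equal
    have sub: "A \<inter> Theta \<subseteq> reg 0 c (-1) 0 0 \<union> H0"
      using equal c01 by (auto simp: A_def Theta_def reg_def H0_def)
    have "emeasure lborel (reg 0 c (-1) 0 0 \<union> H0) = emeasure lborel (reg 0 c (-1) 0 0)"
      by (rule emeasure_Un_null_set[OF reg_lsets H0_null])
    also have "\<dots> = ennreal c" using c01 by (subst reg_emeasure) auto
    finally have "measure Pxi A \<le> c / 3"
      using c01 by (intro Pxi_upper[OF sub sets.Un[OF reg_lsets null_setsD2[OF H0_null]]]) auto
    with P have "1 \<le> c" by simp
    then show ?thesis by simp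
  next
    case greater
    define m where "m = min c (1/a)"
    have m0: "0 \<le> m" using c01 greater by (simp add: m_def)
    have mc: "m \<le> c" and am: "a * m \<le> 1" using greater by (auto simp: m_def min_def field_simps)
    have sub: "A \<inter> Theta \<subseteq> reg 0 m (-1) a 0"
    proof
      fix x assume x: "x \<in> A \<inter> Theta"
      have "0 \<le> a * fst x" "a * fst x \<le> 1" using x by (auto simp: A_def)
      then have "0 \<le> fst x" "fst x \<le> 1/a" using greater by (auto simp: zero_le_mult_iff field_simps)
      then show "x \<in> reg 0 m (-1) a 0" using x by (auto simp: A_def Theta_def reg_def m_def)
    qed
    have "emeasure lborel (reg 0 m (-1) a 0) = ennreal ((m - 0) * (a * (m + 0) / 2 + 0 - (-1)))"
      using m0 greater by (intro reg_emeasure) (auto intro: order.trans[of _ 0] simp: zero_le_mult_iff)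
    then have "measure Pxi A \<le> ((m - 0) * (a * (m + 0) / 2 + 0 - (-1))) / 3"
      using m0 greater by (intro Pxi_upper[OF sub reg_lsets]) auto
    with P have key: "1 \<le> m * (a * m / 2 + 1)" by simp
    have "m * (a * m / 2 + 1) \<le> m * (1/2 + 1)" using am m0 by (intro mult_left_mono) auto
    with key have m23: "2/3 \<le> m" by simp
    show ?thesis
    proof (intro conjI impI)
      show "2/3 \<le> c" using m23 mc by simp
      assume "c = 2/3"
      then have "m = 2/3" using m23 mc by simp
      then have m: "m = 2/3" .
      have "1 \<le> 2/3 * (a * (2/3) / 2 + 1)" using key unfolding m .
      moreover have "a * (2/3) \<le> 1" using am unfolding m .
      ultimately show "a = 3/2" by simp
    qed
  qed
  show ?thesis using main c01 a by (auto simp: c_def)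
qed

lemma K_mem: "-1 \<le> a \<Longrightarrow> (c, \<lambda>t. a * t) \<in> K"
  using lin_meas[of a] by (auto simp: K_def policies_def)

lemma mem_M2K: "(2/3, \<lambda>t. 3/2 * t) \<in> M2 \<inter> K"
proof -
  define A where "A = {x::real\<times>real. fst x \<le> 2/3 \<and> snd x \<le> 3/2 * fst x \<and> (2/3::real) \<in> {0..1} \<and> 3/2 * fst x \<in> {0..1}}"
  have As: "A \<in> sets lborel" unfolding A_def by (rule A2_sets[OF lin_meas])
  have sub: "reg 0 (2/3) (-1) (3/2) 0 \<subseteq> A \<inter> Theta"
    by (auto simp: reg_def A_def Theta_def)
  have e: "emeasure lborel (reg 0 (2/3) (-1) (3/2) 0) = ennreal ((2/3 - 0) * (3/2 * (2/3 + 0) / 2 + 0 - (-1)))"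
    by (intro reg_emeasure) auto
  have "1 / 3 \<le> measure Pxi A"
    by (rule Pxi_lower[OF As sub reg_lsets]) (use e in auto)
  then have "(2/3, \<lambda>t. 3/2 * t) \<in> M2" using lin_meas[of "3/2"]
    by (auto simp: M2_def policies_def A_def)
  then show ?thesis using K_mem[of "3/2" "2/3"] by simp
qed

lemma AE_contra:
  assumes ae: "AE x in Pxi. P x" and B: "B \<in> sets lborel" "B \<subseteq> Theta" "emeasure lborel B \<noteq> 0"
    and nP: "\<And>x. x \<in> B \<Longrightarrow> \<not> P x"
  shows False
proof -
  have "AE x in lborel. x \<in> Theta \<longrightarrow> P x"
    using ae unfolding Pxi_def by (subst (asm) AE_uniform_measure) (simp_all add: Theta_emeasure)
  then have "AE x in lborel. x \<notin> B" by (rule eventually_mono) (use B(2) nP in auto)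
  then have "emeasure lborel B = 0"
    by (subst (asm) AE_iff_measurable[OF B(1)]) auto
  with B(3) show False by simp
qed

lemma M1K_eq: assumes y: "y \<in> M1 \<inter> K" shows "fst y = 1"
proof -
  obtain a where a: "a \<ge> -1" "snd y = (\<lambda>t. a * t)" using y by (auto simp: K_def)
  have ae: "AE x in Pxi. a * fst x \<in> {0..1}" using y a by (auto simp: M1_def)
  have a0: "a = 0"
  proof (cases a "0::real" rule: linorder_cases)
    case less
    have "emeasure lborel (reg (1/2) 1 0 0 1) = ennreal ((1 - 1/2) * (0 * (1 + 1/2) / 2 + 1 - 0))"
      by (intro reg_emeasure) auto
    then have "emeasure lborel (reg (1/2) 1 0 0 1) \<noteq> 0" by simp
    then have False
      by (intro AE_contra[OF ae reg_lsets[of "1/2" 1 0 0 1]]) (use less in \<open>auto simp: reg_def Theta_def zero_le_mult_iff\<close>)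
    then show ?thesis ..
  next
    case greater
    have "emeasure lborel (reg (-1) (-1/2) 0 0 1) = ennreal ((-1/2 - -1) * (0 * (-1/2 + -1) / 2 + 1 - 0))"
      by (intro reg_emeasure) auto
    then have "emeasure lborel (reg (-1) (-1/2) 0 0 1) \<noteq> 0" by simp
    then have False
      by (intro AE_contra[OF ae reg_lsets[of "-1" "-1/2" 0 0 1]]) (use greater in \<open>auto simp: reg_def Theta_def zero_le_mult_iff\<close>)
    then show ?thesis ..
  qed simp
  define c where "c = fst y"
  have c01: "c \<in> {0..1}" using y by (auto simp: M1_def c_def)
  define A where "A = {x::real\<times>real. fst x \<le> c \<and> snd x \<le> 0}"
  have P: "1/3 \<le> measure Pxi A" using y a a0 unfolding A_def c_def M1_def by auto
  have sub: "A \<inter> Theta \<subseteq> reg 0 c (-1) 0 0 \<union> H0"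
    using c01 by (auto simp: A_def Theta_def reg_def H0_def)
  have "emeasure lborel (reg 0 c (-1) 0 0 \<union> H0) = emeasure lborel (reg 0 c (-1) 0 0)"
    by (rule emeasure_Un_null_set[OF reg_lsets H0_null])
  also have "\<dots> = ennreal c" using c01 by (subst reg_emeasure) auto
  finally have "measure Pxi A \<le> c / 3"
    using c01 by (intro Pxi_upper[OF sub sets.Un[OF reg_lsets null_setsD2[OF H0_null]]]) auto
  with P c01 show ?thesis by (simp add: c_def)
qed

lemma mem_M1K: "(1, \<lambda>t. 0 * t) \<in> M1 \<inter> K"
proof -
  define A where "A = {x::real\<times>real. fst x \<le> 1 \<and> snd x \<le> 0 * fst x}"
  have As: "A \<in> sets lborel" unfolding A_def by (rule A1_sets[OF lin_meas])
  have sub: "reg 0 1 (-1) 0 0 \<subseteq> A \<inter> Theta"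
    by (auto simp: reg_def A_def Theta_def)
  have e: "emeasure lborel (reg 0 1 (-1) 0 0) = ennreal ((1 - 0) * (0 * (1 + 0) / 2 + 0 - (-1)))"
    by (intro reg_emeasure) auto
  have "1 / 3 \<le> measure Pxi A"
    by (rule Pxi_lower[OF As sub reg_lsets]) (use e in auto)
  then have "(1, \<lambda>t. 0 * t) \<in> M1" using lin_meas[of 0]
    by (auto simp: M1_def policies_def A_def)
  then show ?thesis using K_mem[of 0 1] by simp
qed

lemma mem_M1: "(0, \<lambda>_. 1) \<in> M1"
proof -
  define A where "A = {x::real\<times>real. fst x \<le> 0 \<and> snd x \<le> (\<lambda>_. 1::real) (fst x)}"
  have As: "A \<in> sets lborel" unfolding A_def by (rule A1_sets) simp
  have sub: "reg (-1) 0 0 0 1 \<subseteq> A \<inter> Theta"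
    by (auto simp: reg_def A_def Theta_def)
  have e: "emeasure lborel (reg (-1) 0 0 0 1) = ennreal ((0 - -1) * (0 * (0 + -1) / 2 + 1 - 0))"
    by (intro reg_emeasure) auto
  have "1 / 3 \<le> measure Pxi A"
    by (rule Pxi_lower[OF As sub reg_lsets]) (use e in auto)
  then show ?thesis
    by (auto simp: M1_def policies_def A_def)
qed

lemma phi4_bound: assumes y: "y \<in> M1 \<inter> Proj ` K" shows "1/2 \<le> fst y"
proof -
  obtain z where z: "z \<in> K" "y = Proj z" using y by auto
  obtain a where a: "a \<ge> -1" "snd z = (\<lambda>t. a * t)" using z by (auto simp: K_def)
  define c where "c = fst y"
  have c01: "c \<in> {0..1}" using y by (auto simp: M1_def c_def)
  have sy: "snd y = (\<lambda>t. clip (a * t))" using z a by (simp add: Proj_def)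
  define A where "A = {x::real\<times>real. fst x \<le> c \<and> snd x \<le> clip (a * fst x)}"
  have P: "1/3 \<le> measure Pxi A" using y sy unfolding A_def c_def M1_def by auto
  show ?thesis
  proof (cases "a \<le> 0")
    case True
    have sub: "A \<inter> Theta \<subseteq> (reg (-1) 0 0 (-1) 0 \<union> reg 0 c (-1) 0 0) \<union> L0"
    proof
      fix x assume x: "x \<in> A \<inter> Theta"
      show "x \<in> (reg (-1) 0 0 (-1) 0 \<union> reg 0 c (-1) 0 0) \<union> L0"
      proof (cases "fst x" "0::real" rule: linorder_cases)
        case less
        have "(a + 1) * fst x \<le> 0" using a(1) less by (intro mult_nonneg_nonpos) auto
        then have "a * fst x \<le> - fst x" by (simp add: algebra_simps)
        then have "clip (a * fst x) \<le> - fst x" using less by (simp add: clip_def)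
        then show ?thesis using x less by (auto simp: A_def Theta_def reg_def)
      next
        case equal then show ?thesis by (simp add: L0_def)
      next
        case greater
        have "a * fst x \<le> 0" using True greater by (intro mult_nonpos_nonneg) auto
        then have "clip (a * fst x) = 0" by (simp add: clip_def)
        then show ?thesis using x greater by (auto simp: A_def Theta_def reg_def)
      qed
    qed
    have "emeasure lborel ((reg (-1) 0 0 (-1) 0 \<union> reg 0 c (-1) 0 0) \<union> L0)
        = emeasure lborel (reg (-1) 0 0 (-1) 0 \<union> reg 0 c (-1) 0 0)"
      by (rule emeasure_Un_null_set[OF sets.Un[OF reg_lsets reg_lsets] L0_null])
    also have "\<dots> \<le> emeasure lborel (reg (-1) 0 0 (-1) 0) + emeasure lborel (reg 0 c (-1) 0 0)"
      by (rule emeasure_subadditive[OF reg_lsets reg_lsets])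
    also have "\<dots> = ennreal (1/2) + ennreal c"
      using c01 by (subst reg_emeasure, simp, simp)+ simp
    also have "\<dots> = ennreal (1/2 + c)" using c01 by (simp add: ennreal_plus)
    finally have "measure Pxi A \<le> (1/2 + c) / 3"
      using c01 by (intro Pxi_upper[OF sub sets.Un[OF sets.Un[OF reg_lsets reg_lsets] null_setsD2[OF L0_null]]]) auto
    with P show ?thesis by (simp add: c_def)
  next
    case False
    have sub: "A \<inter> Theta \<subseteq> reg 0 c (-1) 0 1 \<union> H0"
    proof
      fix x assume x: "x \<in> A \<inter> Theta"
      show "x \<in> reg 0 c (-1) 0 1 \<union> H0"
      proof (cases "fst x < 0")
        case True
        have "a * fst x \<le> 0" using False True by (intro mult_nonneg_nonpos) auto
        then have "clip (a * fst x) = 0" by (simp add: clip_def)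
        then show ?thesis using x True by (auto simp: A_def Theta_def reg_def H0_def)
      next
        case False
        then show ?thesis using x by (auto simp: A_def Theta_def reg_def H0_def)
      qed
    qed
    have "emeasure lborel (reg 0 c (-1) 0 1 \<union> H0) = emeasure lborel (reg 0 c (-1) 0 1)"
      by (rule emeasure_Un_null_set[OF reg_lsets H0_null])
    also have "\<dots> = ennreal ((c - 0) * (0 * (c + 0) / 2 + 1 - (-1)))" using c01 by (intro reg_emeasure) auto
    finally have "measure Pxi A \<le> ((c - 0) * (0 * (c + 0) / 2 + 1 - (-1))) / 3"
      using c01 by (intro Pxi_upper[OF sub sets.Un[OF reg_lsets null_setsD2[OF H0_null]]]) auto
    with P show ?thesis by (simp add: c_def)
  qed
qed

lemma mem4: "(1/2, \<lambda>t. max 0 (min (- t) 1)) \<in> M1 \<inter> Proj ` K"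
proof -
  have proj: "(1/2, \<lambda>t. max 0 (min (- t) 1)) = Proj (1/2, \<lambda>t. - t)"
    by (simp add: Proj_def clip_def)
  have inK: "(1/2, \<lambda>t. - t) \<in> K" using K_mem[of "-1" "1/2"] by simp
  have meas: "(\<lambda>t::real. max 0 (min (- t) 1)) \<in> borel_measurable borel" by measurable
  define A where "A = {x::real\<times>real. fst x \<le> 1/2 \<and> snd x \<le> (\<lambda>t. max 0 (min (- t) 1)) (fst x)}"
  have As: "A \<in> sets lborel" unfolding A_def by (rule A1_sets[OF meas])
  have sub: "reg (-1) 0 0 (-1) 0 \<union> reg 0 (1/2) (-1) 0 0 \<subseteq> A \<inter> Theta"
    by (auto simp: reg_def A_def Theta_def)
  have n: "reg (-1) 0 0 (-1) 0 \<inter> reg 0 (1/2) (-1) 0 0 \<in> null_sets lborel"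
    by (rule null_sets_subset[OF L0_null sets.Int[OF reg_lsets reg_lsets]]) (auto simp: reg_def L0_def)
  have "emeasure lborel (reg (-1) 0 0 (-1) 0 \<union> reg 0 (1/2) (-1) 0 0)
      = emeasure lborel (reg (-1) 0 0 (-1) 0) + emeasure lborel (reg 0 (1/2) (-1) 0 0)"
    by (rule emeasure_Un'[OF reg_lsets reg_lsets n])
  also have "\<dots> = ennreal (1/2) + ennreal (1/2)"
    by (subst reg_emeasure, simp, simp)+ simp
  also have "\<dots> = ennreal (1/2 + 1/2)" by (rule ennreal_plus[symmetric]) auto
  also have "\<dots> = ennreal 1" by simp
  finally have e: "emeasure lborel (reg (-1) 0 0 (-1) 0 \<union> reg 0 (1/2) (-1) 0 0) = ennreal 1" .
  have "1 / 3 \<le> measure Pxi A"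
    by (rule Pxi_lower[OF As sub sets.Un[OF reg_lsets reg_lsets]]) (use e in auto)
  then have "(1/2, \<lambda>t. max 0 (min (- t) 1)) \<in> M1" using meas
    by (auto simp: M1_def policies_def A_def)
  then show ?thesis using proj inK by auto
qed

lemma argmin_eq: "argmin_h (M2 \<inter> K) = {(2/3, \<lambda>t. 3/2 * t)}"
proof
  show "argmin_h (M2 \<inter> K) \<subseteq> {(2/3, \<lambda>t. 3/2 * t)}"
  proof
    fix y assume y: "y \<in> argmin_h (M2 \<inter> K)"
    then have yM: "y \<in> M2 \<inter> K" and le: "h y \<le> h (2/3, \<lambda>t. 3/2 * t)"
      using mem_M2K by (auto simp: argmin_h_def)
    have "fst y = 2/3" using le M2K_bound[OF yM] by (simp add: h_def)
    moreover then have "snd y = (\<lambda>t. 3/2 * t)" using M2K_bound[OF yM] by simp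
    ultimately show "y \<in> {(2/3, \<lambda>t. 3/2 * t)}" by (cases y) simp
  qed
next
  show "{(2/3, \<lambda>t. 3/2 * t)} \<subseteq> argmin_h (M2 \<inter> K)"
    using mem_M2K M2K_bound by (auto simp: argmin_h_def h_def)
qed

lemma clip_id: "x \<in> {0..1} \<Longrightarrow> clip x = x" by (auto simp: clip_def)

theorem mainTheorem3:
  shows "phi = 0 \<and> phi1 = 1 \<and> phi2 = 2/3 \<and> phi3 = 2/3 \<and> phi4 = 1/2
    \<and> argmin_h (M2 \<inter> K) = {(2/3, \<lambda>t. 3/2 * t)}
    \<and> Proj (2/3, \<lambda>t. 3/2 * t) = (2/3, \<lambda>t. max 0 (min (3/2 * t) 1))
    \<and> Proj (2/3, \<lambda>t. 3/2 * t) \<in> argmin_h (Proj ` (M2 \<inter> K))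
    \<and> (1/2, \<lambda>t. max 0 (min (- t) 1)) = Proj (1/2, \<lambda>t. - t)
    \<and> (1/2, \<lambda>t. max 0 (min (- t) 1)) \<in> argmin_h (M1 \<inter> Proj ` K)"
proof -
  have "0 \<in> h ` M1" by (rule image_eqI[OF _ mem_M1]) (simp add: h_def)
  then have p0: "phi = 0" unfolding phi_def
  proof (rule cInf_eq_minimum)
    fix x assume "x \<in> h ` M1"
    then obtain z where z: "z \<in> M1" "x = h z" by blast
    then show "0 \<le> x" by (simp add: h_def M1_def)
  qed
  have "1 \<in> h ` (M1 \<inter> K)" by (rule image_eqI[OF _ mem_M1K]) (simp add: h_def)
  then have p1: "phi1 = 1" unfolding phi1_def
  proof (rule cInf_eq_minimum)
    fix x assume "x \<in> h ` (M1 \<inter> K)"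
    then obtain z where z: "z \<in> M1 \<inter> K" "x = h z" by blast
    then show "1 \<le> x" using M1K_eq[OF z(1)] by (simp add: h_def)
  qed
  have pr: "Proj (2/3, \<lambda>t. 3/2 * t) = (2/3, \<lambda>t. max 0 (min (3/2 * t) 1))"
    by (simp add: Proj_def clip_def)
  have p2: "phi2 = 2/3" unfolding phi2_def argmin_eq
    by (simp add: pr h_def)
  have hP: "\<And>y. y \<in> M2 \<inter> K \<Longrightarrow> 2/3 \<le> h (Proj y) \<and> (y = (2/3, \<lambda>t. 3/2 * t) \<longrightarrow> h (Proj y) = 2/3)"
  proof -
    fix y assume y: "y \<in> M2 \<inter> K"
    have "h (Proj y) = fst y" using M2K_bound[OF y] by (simp add: h_def Proj_def clip_id)
    then show "2/3 \<le> h (Proj y) \<and> (y = (2/3, \<lambda>t. 3/2 * t) \<longrightarrow> h (Proj y) = 2/3)"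
      using M2K_bound[OF y] by auto
  qed
  have e3: "h (Proj (2/3, \<lambda>t. 3/2 * t)) = 2/3" using hP[OF mem_M2K] by simp
  have "2/3 \<in> h ` Proj ` (M2 \<inter> K)"
    by (rule image_eqI[of _ h "Proj (2/3, \<lambda>t. 3/2 * t)", OF e3[symmetric] imageI[of _ _ Proj, OF mem_M2K]])
  then have p3: "phi3 = 2/3" unfolding phi3_def
  proof (rule cInf_eq_minimum)
    fix x assume "x \<in> h ` Proj ` (M2 \<inter> K)"
    then obtain y where y: "y \<in> M2 \<inter> K" "x = h (Proj y)" by blast
    show "2/3 \<le> x" unfolding y(2) using hP[OF y(1)] by (rule conjunct1)
  qed
  have am3: "Proj (2/3, \<lambda>t. 3/2 * t) \<in> argmin_h (Proj ` (M2 \<inter> K))"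
  proof -
    have e: "h (Proj (2/3, \<lambda>t. 3/2 * t)) = 2/3" using hP[OF mem_M2K] by simp
    have "\<forall>z \<in> Proj ` (M2 \<inter> K). h (Proj (2/3, \<lambda>t. 3/2 * t)) \<le> h z"
    proof
      fix z assume "z \<in> Proj ` (M2 \<inter> K)"
      then obtain y where y: "y \<in> M2 \<inter> K" "z = Proj y" by blast
      have "2/3 \<le> h (Proj y)" using hP[OF y(1)] by blast
      then show "h (Proj (2/3, \<lambda>t. 3/2 * t)) \<le> h z" unfolding e y(2) .
    qed
    moreover have "Proj (2/3, \<lambda>t. 3/2 * t) \<in> Proj ` (M2 \<inter> K)" using mem_M2K by (rule imageI)
    ultimately show ?thesis unfolding argmin_h_def by blast
  qed
  have pr4: "(1/2, \<lambda>t. max 0 (min (- t) 1)) = Proj (1/2, \<lambda>t. - t)"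
    by (simp add: Proj_def clip_def)
  have h4: "h (1/2, \<lambda>t. max 0 (min (- t) 1)) = 1/2" by (simp add: h_def)
  have lb4: "\<And>z. z \<in> M1 \<inter> Proj ` K \<Longrightarrow> 1/2 \<le> h z"
    using phi4_bound by (simp add: h_def)
  have am4: "(1/2, \<lambda>t. max 0 (min (- t) 1)) \<in> argmin_h (M1 \<inter> Proj ` K)"
    unfolding argmin_h_def
  proof (intro CollectI conjI ballI)
    show "(1/2, \<lambda>t. max 0 (min (- t) 1)) \<in> M1 \<inter> Proj ` K" by (rule mem4)
    fix z assume "z \<in> M1 \<inter> Proj ` K"
    then show "h (1/2, \<lambda>t. max 0 (min (- t) 1)) \<le> h z" unfolding h4 by (rule lb4)
  qed
  have m4: "1/2 \<in> h ` (M1 \<inter> Proj ` K)" by (rule image_eqI[of _ h "(1/2, \<lambda>t. max 0 (min (- t) 1))", OF h4[symmetric] mem4])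
  have p4: "phi4 = 1/2" unfolding phi4_def
  proof (rule cInf_eq_minimum)
    show "1/2 \<in> h ` (M1 \<inter> Proj ` K)" by (rule m4)
    fix x assume "x \<in> h ` (M1 \<inter> Proj ` K)"
    then obtain z where z: "z \<in> M1 \<inter> Proj ` K" "x = h z" by blast
    show "1/2 \<le> x" unfolding z(2) by (rule lb4[OF z(1)])
  qed
  show ?thesis by (intro conjI p0 p1 p2 p3 p4 argmin_eq pr am3 pr4 am4)
qed

end
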